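(* For any categorial sequential allocation mechanism $f_\mathcal O$, any assignment of each agent as optimistic or pessimistic, any agent $j$, and any profile: (1) if $j$ is optimistic, then the rank (in $R_j$) of the bundle allocated to $j$ is at most $n^p+1-\prod_{l=K_j}^{p}k_{j,\mathcal O_j(l)}$; (2) if $j$ is pessimistic, then the rank of the bundle allocated to $j$ is at most $n^p-\sum_{l=1}^{p}(k_{j,\mathcal O_j(l)}-1)$.
   Context: Basic categorized domain: $n$ agents, $p$ categories $D_i=\{1,\ldots,n\}$ of indivisible items, bundles $\mathfrak D=D_1\times\cdots\times D_p$; each agent $j$ has a linear order $R_j$ over $\mathfrak D$ (a profile is $(R_1,\ldots,R_n)$). $\mathrm{Rank}(R,\vec d)\in\{1,\ldots,n^p\}$ is the position of $\vec d$ in $R$ (top position has rank $1$). Categorial sequential allocation mechanism (CSAM) $f_\mathcal O$: given a linear order $\mathcal O$ over $\{1,\ldots,n\}\times\{1,\ldots,p\}$, in rounds $t=1,\ldots,np$, if the $t$-th element of $\mathcal O$ is $(j,i)$ then agent $j$ chooses an item $d_{j,i}$ from $D_{i,t}$, the set of items of $D_i$ not yet chosen at the start of round $t$; the choice is announced to all. Agent $j$ finally receives $(d_{j,1},\ldots,d_{j,p})$. Each agent is fixed in advance to be optimistic or pessimistic. When agent $j$ chooses from $D_i$ in round $t$, a bundle is available to her if for each category $l$ from which she has already chosen its $l$-th component equals her chosen item $d_{j,l}$, and for each other category $l$ its $l$-th component lies in $D_{l,t}$. An optimistic agent chooses the $i$-th component of her top-ranked available bundle. A pessimistic agent chooses the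 $d\in D_{i,t}$ for which her lowest-ranked available bundle with $i$-th component $d$ is highest in $R_j$. Notation: $\mathcal O_j$ is the order over categories in which agent $j$ chooses in $\mathcal O$ ($\mathcal O_j(l)$ is the $l$-th category she chooses from). $k_{j,i}$ is the number of items in $D_i$ still available right before $j$ chooses from $D_i$, i.e. $n$ minus the number of agents who choose from $D_i$ before $j$ in $\mathcal O$. $K_j$ is the smallest index $K\in\{1,\ldots,p\}$ such that for every $l$ with $K<l\leq p$, no agent chooses an item from category $\mathcal O_j(l)$ in any round strictly between the round of $(j,\mathcal O_j(K))$ and the round of $(j,\mathcal O_j(l))$. *)

theory Defs
  imports Main
begin

text \<open>Conventions (0-based): agents are 0..<n, categories are 0..<p, the items of every
category are 0..<n.  A linear order R over
bundles is a list enumerating every bundle exactly once, top first; Rank R b = position + 1.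
An order Ord (the paper's O) over agent/category pairs is a list enumerating {0..<n} x {0..<p} exactly once;
its t-th element (0-based) is the pick made in round t+1.\<close>

definition bundles :: "nat \<Rightarrow> nat \<Rightarrow> nat list set" where
  "bundles n p = {b. length b = p \<and> (\<forall>i<p. b ! i < n)}"

definition is_linear_order :: "nat \<Rightarrow> nat \<Rightarrow> nat list list \<Rightarrow> bool" where
  "is_linear_order n p R \<longleftrightarrow> distinct R \<and> set R = bundles n p"

definition pos :: "'a list \<Rightarrow> 'a \<Rightarrow> nat" where
  "pos xs x = (LEAST t. t < length xs \<and> xs ! t = x)"

definition Rank :: "nat list list \<Rightarrow> nat list \<Rightarrow> nat" where
  "Rank R b = pos R b + 1"

definition is_order :: "nat \<Rightarrow> nat \<Rightarrow> (nat \<times> nat) list \<Rightarrow> bool" where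
  "is_order n p Ord \<longleftrightarrow> distinct Ord \<and> set Ord = {0..<n} \<times> {0..<p}"

text \<open>A state records, for each agent a and category i, the item chosen so far (if any).\<close>
type_synonym state = "nat \<Rightarrow> nat \<Rightarrow> nat option"

definition avail_items :: "nat \<Rightarrow> state \<Rightarrow> nat \<Rightarrow> nat set" where
  "avail_items n s i = {d. d < n \<and> (\<forall>a. s a i \<noteq> Some d)}"

definition avail_bundles :: "nat \<Rightarrow> nat \<Rightarrow> state \<Rightarrow> nat \<Rightarrow> nat list set" where
  "avail_bundles n p s j = {b \<in> bundles n p. \<forall>l<p.
      (case s j l of Some d \<Rightarrow> b ! l = d | None \<Rightarrow> b ! l \<in> avail_items n s l)}"

definition opt_choice :: "nat \<Rightarrow> nat \<Rightarrow> nat list list \<Rightarrow> state \<Rightarrow> nat \<Rightarrow> nat \<Rightarrow> nat" where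
  "opt_choice n p R s j i = hd (filter (\<lambda>b. b \<in> avail_bundles n p s j) R) ! i"

definition worst_with :: "nat \<Rightarrow> nat \<Rightarrow> nat list list \<Rightarrow> state \<Rightarrow> nat \<Rightarrow> nat \<Rightarrow> nat \<Rightarrow> nat list" where
  "worst_with n p R s j i d = last (filter (\<lambda>b. b \<in> avail_bundles n p s j \<and> b ! i = d) R)"

definition pess_choice :: "nat \<Rightarrow> nat \<Rightarrow> nat list list \<Rightarrow> state \<Rightarrow> nat \<Rightarrow> nat \<Rightarrow> nat" where
  "pess_choice n p R s j i =
     (ARG_MIN (\<lambda>d. Rank R (worst_with n p R s j i d)) d. d \<in> avail_items n s i)"

definition choice :: "nat \<Rightarrow> nat \<Rightarrow> (nat \<Rightarrow> nat list list) \<Rightarrow> (nat \<Rightarrow> bool) \<Rightarrow> state \<Rightarrow> nat \<Rightarrow> nat \<Rightarrow> nat" where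
  "choice n p R optimistic s j i =
     (if optimistic j then opt_choice n p (R j) s j i else pess_choice n p (R j) s j i)"

fun run :: "nat \<Rightarrow> nat \<Rightarrow> (nat \<Rightarrow> nat list list) \<Rightarrow> (nat \<Rightarrow> bool) \<Rightarrow> (nat \<times> nat) list \<Rightarrow> state \<Rightarrow> state" where
  "run n p R optimistic [] s = s"
| "run n p R optimistic ((j, i) # os) s =
     run n p R optimistic os (s(j := (s j)(i := Some (choice n p R optimistic s j i))))"

definition CSAM :: "nat \<Rightarrow> nat \<Rightarrow> (nat \<times> nat) list \<Rightarrow> (nat \<Rightarrow> bool) \<Rightarrow> (nat \<Rightarrow> nat list list) \<Rightarrow> nat \<Rightarrow> nat list" where
  "CSAM n p Ord optimistic R j =
     (let s = run n p R optimistic Ord (\<lambda>_ _. None) in map (\<lambda>l. the (s j l)) [0..<p])"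

text \<open>O_j as a list: O_j(l) (1-based, as in the paper) is (Oj Ord j) ! (l - 1).\<close>
definition Oj :: "(nat \<times> nat) list \<Rightarrow> nat \<Rightarrow> nat list" where
  "Oj Ord j = map snd (filter (\<lambda>x. fst x = j) Ord)"

definition kk :: "nat \<Rightarrow> (nat \<times> nat) list \<Rightarrow> nat \<Rightarrow> nat \<Rightarrow> nat" where
  "kk n Ord j i = n - card {a. (a, i) \<in> set Ord \<and> pos Ord (a, i) < pos Ord (j, i)}"

text \<open>K_j (1-based index into O_j).\<close>
definition KK :: "nat \<Rightarrow> (nat \<times> nat) list \<Rightarrow> nat \<Rightarrow> nat" where
  "KK p Ord j = (LEAST K. 1 \<le> K \<and> K \<le> p \<and>
     (\<forall>l. K < l \<and> l \<le> p \<longrightarrow>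
        \<not> (\<exists>t. pos Ord (j, Oj Ord j ! (K - 1)) < t \<and> t < pos Ord (j, Oj Ord j ! (l - 1)) \<and>
               snd (Ord ! t) = Oj Ord j ! (l - 1))))"

end

theory Submission
  imports Defs
begin

lemma pos_nth: "distinct xs \<Longrightarrow> i < length xs \<Longrightarrow> pos xs (xs!i) = i"
  unfolding pos_def by (rule Least_equality) (auto simp: nth_eq_iff_index_eq)

lemma pos_in: "x \<in> set xs \<Longrightarrow> pos xs x < length xs \<and> xs ! pos xs x = x"
proof -
  assume "x \<in> set xs"
  then obtain i where "i < length xs" "xs!i = x" by (auto simp: in_set_conv_nth)
  then show ?thesis unfolding pos_def by (metis (mono_tags, lifting) LeastI)
qed

lemma pos_inj: "x \<in> set xs \<Longrightarrow> y \<in> set xs \<Longrightarrow> pos xs x = pos xs y \<Longrightarrow> x = y"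
  by (metis pos_in)

lemma pos_Cons: "x \<in> set (a#xs) \<Longrightarrow> pos (a#xs) x = (if x = a then 0 else Suc (pos xs x))"
proof (cases "x = a")
  case True then show ?thesis unfolding pos_def by (intro Least_equality) auto
next
  case False
  assume "x \<in> set (a#xs)"
  with False have "x \<in> set xs" by auto
  then obtain i where "i < length xs" "xs!i = x" by (auto simp: in_set_conv_nth)
  have "pos (a#xs) x = Suc (LEAST m. Suc m < length (a#xs) \<and> (a#xs)!(Suc m) = x)"
    unfolding pos_def
    by (rule Least_Suc[where n="Suc i"]) (use \<open>i < length xs\<close> \<open>xs!i = x\<close> False in auto)
  then show ?thesis using False by (simp add: pos_def)
qed

lemma hd_filter_in: "b \<in> set R \<Longrightarrow> P b \<Longrightarrow> hd (filter P R) \<in> set R \<and> P (hd (filter P R))"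
proof -
  assume "b \<in> set R" "P b"
  then have "filter P R \<noteq> []" by (auto simp: filter_empty_conv)
  then have "hd (filter P R) \<in> set (filter P R)" by (rule hd_in_set)
  then show ?thesis by auto
qed

lemma last_filter_in: "b \<in> set R \<Longrightarrow> P b \<Longrightarrow> last (filter P R) \<in> set R \<and> P (last (filter P R))"
proof -
  assume "b \<in> set R" "P b"
  then have "filter P R \<noteq> []" by (auto simp: filter_empty_conv)
  then have "last (filter P R) \<in> set (filter P R)" by (rule last_in_set)
  then show ?thesis by auto
qed

lemma hd_filter_le: "b \<in> set R \<Longrightarrow> P b \<Longrightarrow> pos R (hd (filter P R)) \<le> pos R b"
proof (induction R)
  case Nil then show ?case by simp
next
  case (Cons a xs)
  show ?case
  proof (cases "P a")
    case True then show ?thesis using Cons.prems by (simp add: pos_Cons)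
  next
    case False
    then have b: "b \<in> set xs" "b \<noteq> a" using Cons.prems by auto
    have h: "hd (filter P xs) \<in> set xs" "P (hd (filter P xs))" using hd_filter_in[of b xs P, OF b(1) Cons.prems(2)] by auto
    then have "hd (filter P xs) \<noteq> a" using False by auto
    then show ?thesis using False b h Cons.IH[OF b(1) Cons.prems(2)] by (simp add: pos_Cons)
  qed
qed

lemma hd_filter_len: "b \<in> set R \<Longrightarrow> P b \<Longrightarrow> pos R (hd (filter P R)) + length (filter P R) \<le> length R"
proof (induction R)
  case Nil then show ?case by simp
next
  case (Cons a xs)
  show ?case
  proof (cases "P a")
    case True then show ?thesis using Cons.prems by (simp add: pos_Cons length_filter_le)
  next
    case False
    then have b: "b \<in> set xs" "b \<noteq> a" using Cons.prems by auto
    have h: "hd (filter P xs) \<in> set xs" "P (hd (filter P xs))" using hd_filter_in[of b xs P, OF b(1) Cons.prems(2)] by auto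
    then have "hd (filter P xs) \<noteq> a" using False by auto
    then show ?thesis using False b h Cons.IH[OF b(1) Cons.prems(2)] by (simp add: pos_Cons)
  qed
qed

lemma last_filter_ge: "distinct R \<Longrightarrow> b \<in> set R \<Longrightarrow> P b \<Longrightarrow> pos R b \<le> pos R (last (filter P R))"
proof (induction R)
  case Nil then show ?case by simp
next
  case (Cons a xs)
  show ?case
  proof (cases "filter P xs = []")
    case True
    then have "b = a" using Cons.prems by (auto simp: filter_empty_conv)
    then show ?thesis using True Cons.prems by (simp add: pos_Cons)
  next
    case False
    then have l: "last (filter P (a#xs)) = last (filter P xs)" by simp
    have lin: "last (filter P xs) \<in> set xs" using False last_in_set by fastforce
    then have "last (filter P xs) \<noteq> a" using Cons.prems by auto
    show ?thesis
    proof (cases "b = a")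
      case True then show ?thesis by (simp add: pos_Cons)
    next
      case False
      then have "b \<in> set xs" using Cons.prems by auto
      moreover have "distinct xs" using Cons.prems by simp
      ultimately have "pos xs b \<le> pos xs (last (filter P xs))" using Cons.IH Cons.prems(3) by blast
      then show ?thesis using l lin False \<open>b \<in> set xs\<close> \<open>last (filter P xs) \<noteq> a\<close> by (simp add: pos_Cons)
    qed
  qed
qed

definition LS :: "nat \<Rightarrow> (nat \<Rightarrow> 'a set) \<Rightarrow> 'a list set" where
  "LS p S = {b. length b = p \<and> (\<forall>l<p. b!l \<in> S l)}"

lemma LS_Suc: "LS (Suc p) S = (\<lambda>(xs,x). xs @ [x]) ` (LS p S \<times> S p)"
proof
  show "LS (Suc p) S \<subseteq> (\<lambda>(xs,x). xs @ [x]) ` (LS p S \<times> S p)"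
  proof
    fix b assume b: "b \<in> LS (Suc p) S"
    then have lb: "length b = Suc p" by (simp add: LS_def)
    have e: "take (Suc p) b = take p b @ [b!p]" by (rule take_Suc_conv_app_nth) (simp add: lb)
    have t: "take (Suc p) b = b" using lb by simp
    have "b = take p b @ [b!p]" using trans[OF t[symmetric] e] .
    moreover have "take p b \<in> LS p S" "b!p \<in> S p" using b by (auto simp: LS_def)
    ultimately show "b \<in> (\<lambda>(xs,x). xs @ [x]) ` (LS p S \<times> S p)"
      by (intro rev_image_eqI[of "(take p b, b!p)"]) auto
  qed
next
  show "(\<lambda>(xs,x). xs @ [x]) ` (LS p S \<times> S p) \<subseteq> LS (Suc p) S"
    by (auto simp: LS_def nth_append less_Suc_eq)
qed

lemma card_LS: "card (LS p S) = (\<Prod>l<p. card (S l))"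
proof (induction p)
  case 0
  have "LS 0 S = {[]}" by (auto simp: LS_def)
  then show ?case by simp
next
  case (Suc p)
  have "inj_on (\<lambda>(xs,x). xs @ [x]) (LS p S \<times> S p)"
    by (auto simp: inj_on_def)
  then have "card (LS (Suc p) S) = card (LS p S) * card (S p)"
    by (simp add: LS_Suc card_image card_cartesian_product)
  then show ?case using Suc by simp
qed

lemma LS_nonempty: "(\<forall>l<p. S l \<noteq> {}) \<Longrightarrow> map (\<lambda>l. SOME x. x \<in> S l) [0..<p] \<in> LS p S"
  by (auto simp: LS_def some_in_eq)

lemma bundles_LS: "bundles n p = LS p (\<lambda>_. {..<n})"
  by (auto simp: bundles_def LS_def)

lemma card_bundles: "card (bundles n p) = n ^ p"
  by (simp add: bundles_LS card_LS)

lemma avail_LS: "(\<forall>l d. s j l = Some d \<longrightarrow> d < n) \<Longrightarrow>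
  avail_bundles n p s j = LS p (\<lambda>l. case s j l of Some d \<Rightarrow> {d} | None \<Rightarrow> avail_items n s l)"
  unfolding avail_bundles_def LS_def bundles_def
  by (auto simp: avail_items_def split: option.splits)


lemma run_app: "run n p R opt (xs @ ys) s = run n p R opt ys (run n p R opt xs s)"
proof (induction n p R opt xs s rule: run.induct)
  case (2 n p R opt a i os s)
  show ?case by (simp only: append_Cons run.simps) (rule 2)
qed simp

lemma avail_mono: "(\<And>a. s a l = Some x \<Longrightarrow> s' a l = Some x) \<Longrightarrow> x \<in> avail_items n s' l \<Longrightarrow> x \<in> avail_items n s l"
  unfolding avail_items_def by blast
lemma avail_same: "(\<And>a. s' a l = s a l) \<Longrightarrow> avail_items n s' l = avail_items n s l"
  unfolding avail_items_def by simp
lemma avail_keep: "(\<And>a. s' a l = Some x \<Longrightarrow> s a l = Some x) \<Longrightarrow> x \<in> avail_items n s l \<Longrightarrow> x \<in> avail_items n s' l"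
  unfolding avail_items_def by blast

locale csam =
  fixes n p :: nat and Ord :: "(nat \<times> nat) list" and optimistic :: "nat \<Rightarrow> bool"
    and R :: "nat \<Rightarrow> nat list list" and j :: nat
  assumes p1: "1 \<le> p"
    and ord: "is_order n p Ord"
    and lin: "\<forall>a<n. is_linear_order n p (R a)"
    and jn: "j < n"
begin

lemma dO: "distinct Ord" and sO: "set Ord = {0..<n} \<times> {0..<p}"
  using ord by (auto simp: is_order_def)

lemma dR: "a < n \<Longrightarrow> distinct (R a)" and sR: "a < n \<Longrightarrow> set (R a) = bundles n p"
  using lin by (auto simp: is_linear_order_def)

lemma lenR: "a < n \<Longrightarrow> length (R a) = n ^ p"
proof -
  assume a: "a < n"
  have "length (R a) = card (set (R a))" using distinct_card[OF dR[OF a]] by simp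
  then show ?thesis using sR[OF a] card_bundles by simp
qed

lemma take_member: "x \<in> set (take t Ord) \<longleftrightarrow> x \<in> set Ord \<and> pos Ord x < t"
proof
  assume "x \<in> set (take t Ord)"
  then obtain i where i: "i < length (take t Ord)" "take t Ord ! i = x" by (auto simp: in_set_conv_nth)
  then have "i < t" "i < length Ord" "Ord ! i = x" by auto
  then show "x \<in> set Ord \<and> pos Ord x < t" using pos_nth[OF dO] by auto
next
  assume a: "x \<in> set Ord \<and> pos Ord x < t"
  then have "pos Ord x < length Ord" "Ord ! pos Ord x = x" using pos_in[of x Ord] by auto
  then have l: "pos Ord x < length (take t Ord)" and e: "take t Ord ! pos Ord x = x" using a by simp_all
  show "x \<in> set (take t Ord)" using nth_mem[OF l] unfolding e .
qed

lemma take_Suc_set: "t < length Ord \<Longrightarrow> set (take (Suc t) Ord) = insert (Ord!t) (set (take t Ord))"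
  by (simp add: take_Suc_conv_app_nth)

lemma not_in_take: "t < length Ord \<Longrightarrow> Ord!t \<notin> set (take t Ord)"
  using take_member pos_nth[OF dO] by simp

definition st :: "nat \<Rightarrow> state" where
  "st t = run n p R optimistic (take t Ord) (\<lambda>_ _. None)"

lemma st_Suc: "t < length Ord \<Longrightarrow> Ord!t = (a,i) \<Longrightarrow>
   st (Suc t) = (st t)(a := (st t a)(i := Some (choice n p R optimistic (st t) a i)))"
  by (simp add: st_def take_Suc_conv_app_nth run_app)

definition Inv :: "nat \<Rightarrow> bool" where
  "Inv t \<longleftrightarrow> (\<forall>a l. st t a l \<noteq> None \<longleftrightarrow> (a,l) \<in> set (take t Ord))
     \<and> (\<forall>a l d. st t a l = Some d \<longrightarrow> d < n)
     \<and> (\<forall>l. inj_on (\<lambda>a. the (st t a l)) {a. st t a l \<noteq> None})"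

lemma InvD1: "Inv t \<Longrightarrow> st t a l \<noteq> None \<longleftrightarrow> (a,l) \<in> set (take t Ord)"
  unfolding Inv_def by blast
lemma InvD2: "Inv t \<Longrightarrow> st t a l = Some d \<Longrightarrow> d < n"
  unfolding Inv_def by blast
lemma InvD3: "Inv t \<Longrightarrow> inj_on (\<lambda>a. the (st t a l)) {a. st t a l \<noteq> None}"
  unfolding Inv_def by blast


lemma avail_card: assumes "Inv t"
  shows "card (avail_items n (st t) l) = n - card {a. (a,l) \<in> set (take t Ord)}"
proof -
  let ?U = "{a. st t a l \<noteq> None}"
  let ?f = "\<lambda>a. the (st t a l)"
  have U: "?U = {a. (a,l) \<in> set (take t Ord)}" using InvD1[OF assms] by blast
  have Usub: "?U \<subseteq> {..<n}" unfolding U using take_member sO by auto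
  have img: "x \<in> ?f ` ?U \<longleftrightarrow> (\<exists>a. st t a l = Some x)" for x
  proof
    assume "x \<in> ?f ` ?U" then obtain a where "st t a l \<noteq> None" "x = the (st t a l)" by blast
    then show "\<exists>a. st t a l = Some x" by auto
  next
    assume "\<exists>a. st t a l = Some x" then obtain a where "st t a l = Some x" by blast
    then show "x \<in> ?f ` ?U" by (intro image_eqI[of _ _ a]) auto
  qed
  have av: "avail_items n (st t) l = {..<n} - ?f ` ?U"
    unfolding avail_items_def using img by blast
  have fU: "?f ` ?U \<subseteq> {..<n}" using img InvD2[OF assms] by blast
  have "card (?f ` ?U) = card ?U" using InvD3[OF assms] by (rule card_image)
  moreover have "finite (?f ` ?U)" using fU finite_subset by blast
  ultimately show ?thesis unfolding av U[symmetric] using fU by (simp add: card_Diff_subset)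
qed

lemma avail_nonempty: assumes "Inv t" "(a,l) \<in> set Ord" "(a,l) \<notin> set (take t Ord)"
  shows "avail_items n (st t) l \<noteq> {}"
proof -
  have "{a'. (a',l) \<in> set (take t Ord)} \<subseteq> {..<n} - {a}" using assms take_member sO by auto
  then have "card {a'. (a',l) \<in> set (take t Ord)} \<le> card ({..<n} - {a})" by (intro card_mono) auto
  moreover have "a < n" using assms sO by auto
  ultimately have "card {a'. (a',l) \<in> set (take t Ord)} < n" by simp
  then have "card (avail_items n (st t) l) > 0" using avail_card[OF assms(1)] by simp
  then show ?thesis by auto
qed

lemma Sf_nonempty: assumes "Inv t" "a < n" "l < p"
  shows "(case st t a l of Some d \<Rightarrow> {d} | None \<Rightarrow> avail_items n (st t) l) \<noteq> {}"
proof (cases "st t a l")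
  case None
  have "(a,l) \<notin> set (take t Ord)" using InvD1[OF assms(1), of a l] None by simp
  moreover have "(a,l) \<in> set Ord" using assms sO by simp
  ultimately show ?thesis using None avail_nonempty[OF assms(1)] by simp
qed simp

lemma avail_bundles_LS: assumes "Inv t"
  shows "avail_bundles n p (st t) a = LS p (\<lambda>l. case st t a l of Some d \<Rightarrow> {d} | None \<Rightarrow> avail_items n (st t) l)"
  using InvD2[OF assms] by (intro avail_LS) blast

lemma avail_bundles_ne: assumes "Inv t" "a < n"
  shows "map (\<lambda>l. SOME x. x \<in> (case st t a l of Some d \<Rightarrow> {d} | None \<Rightarrow> avail_items n (st t) l)) [0..<p]
      \<in> avail_bundles n p (st t) a"
  unfolding avail_bundles_LS[OF assms(1)] using Sf_nonempty[OF assms] by (intro LS_nonempty) blast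

lemma avail_comp: "b \<in> avail_bundles n p s a \<Longrightarrow> l < p \<Longrightarrow> s a l = None \<Longrightarrow> b!l \<in> avail_items n s l"
  unfolding avail_bundles_def by fastforce

lemma avail_in_R: "b \<in> avail_bundles n p s a \<Longrightarrow> a < n \<Longrightarrow> b \<in> set (R a)"
  using sR unfolding avail_bundles_def by blast

lemma choice_avail: assumes "Inv t" "t < length Ord" "Ord!t = (a,i)"
  shows "choice n p R optimistic (st t) a i \<in> avail_items n (st t) i"
proof -
  have ai: "(a,i) \<in> set Ord" using nth_mem[OF assms(2)] assms(3) by simp
  then have an: "a < n" "i < p" using sO by auto
  have nt: "(a,i) \<notin> set (take t Ord)" using not_in_take[OF assms(2)] assms(3) by simp
  then have none: "st t a i = None" using InvD1[OF assms(1), of a i] by simp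
  show ?thesis
  proof (cases "optimistic a")
    case True
    let ?A = "avail_bundles n p (st t) a"
    obtain b0 where b0: "b0 \<in> ?A" using avail_bundles_ne[OF assms(1) an(1)] by blast
    have "b0 \<in> set (R a)" using avail_in_R[OF b0 an(1)] .
    then have "hd (filter (\<lambda>b. b \<in> ?A) (R a)) \<in> ?A"
      using hd_filter_in[of b0 "R a" "\<lambda>b. b \<in> ?A"] b0 by blast
    then have "hd (filter (\<lambda>b. b \<in> ?A) (R a)) ! i \<in> avail_items n (st t) i"
      using avail_comp an(2) none by blast
    then show ?thesis using True unfolding choice_def opt_choice_def by simp
  next
    case False
    have "avail_items n (st t) i \<noteq> {}" using avail_nonempty[OF assms(1) ai nt] .
    then obtain d where "d \<in> avail_items n (st t) i" by blast
    then have "(ARG_MIN (\<lambda>d. Rank (R a) (worst_with n p (R a) (st t) a i d)) d. d \<in> avail_items n (st t) i) \<in> avail_items n (st t) i"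
      by (rule arg_min_nat_lemma[THEN conjunct1])
    then show ?thesis using False unfolding choice_def pess_choice_def by simp
  qed
qed

lemma step_facts: assumes "Inv t" "t < length Ord" "Ord!t = (a,i)"
  defines "d \<equiv> choice n p R optimistic (st t) a i"
  shows "st (Suc t) a' l = (if a' = a \<and> l = i then Some d else st t a' l)"
    and "st t a i = None" and "d \<in> avail_items n (st t) i"
    and "set (take (Suc t) Ord) = insert (a,i) (set (take t Ord))"
proof -
  have s': "st (Suc t) = (st t)(a := (st t a)(i := Some d))" using st_Suc[OF assms(2,3)] d_def by simp
  show "st (Suc t) a' l = (if a' = a \<and> l = i then Some d else st t a' l)"
    unfolding s' by simp
  have nt: "(a,i) \<notin> set (take t Ord)" using not_in_take[OF assms(2)] assms(3) by simp
  then show "st t a i = None" using InvD1[OF assms(1), of a i] by simp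
  show "d \<in> avail_items n (st t) i" using choice_avail[OF assms(1-3)] d_def by simp
  show "set (take (Suc t) Ord) = insert (a,i) (set (take t Ord))" using take_Suc_set[OF assms(2)] assms(3) by simp
qed

lemma Inv_Suc: assumes "Inv t" "t < length Ord" shows "Inv (Suc t)"
proof -
  obtain a i where ai: "Ord!t = (a,i)" by (cases "Ord!t") auto
  define d where "d = choice n p R optimistic (st t) a i"
  note sf = step_facts[OF assms ai, folded d_def]
  have upd: "st (Suc t) a' l = (if a' = a \<and> l = i then Some d else st t a' l)" for a' l by (rule sf(1))
  have none: "st t a i = None" by (rule sf(2))
  have dav: "d \<in> avail_items n (st t) i" by (rule sf(3))
  have ts: "set (take (Suc t) Ord) = insert (a,i) (set (take t Ord))" by (rule sf(4))
  have dn: "d < n" using dav by (simp add: avail_items_def)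
  have c1: "st (Suc t) a' l \<noteq> None \<longleftrightarrow> (a',l) \<in> set (take (Suc t) Ord)" for a' l
  proof (cases "a' = a \<and> l = i")
    case True
    have "st (Suc t) a' l = Some d" unfolding upd using True by (rule if_P)
    moreover have "(a',l) \<in> set (take (Suc t) Ord)" unfolding ts using True by simp
    ultimately show ?thesis by simp
  next
    case False
    then have e1: "st (Suc t) a' l = st t a' l" unfolding upd by (rule if_not_P)
    have e2: "(a',l) \<in> set (take (Suc t) Ord) \<longleftrightarrow> (a',l) \<in> set (take t Ord)" using ts False by auto
    show ?thesis unfolding e1 by (rule trans[OF InvD1[OF assms(1)] e2[symmetric]])
  qed
  have c2: "st (Suc t) a' l = Some e \<Longrightarrow> e < n" for a' l e
  proof (cases "a' = a \<and> l = i")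
    case True
    assume h: "st (Suc t) a' l = Some e"
    have "st (Suc t) a' l = Some d" unfolding upd using True by (rule if_P)
    then show ?thesis using h dn by simp
  next
    case False
    assume h: "st (Suc t) a' l = Some e"
    have "st (Suc t) a' l = st t a' l" unfolding upd using False by (rule if_not_P)
    then have "st t a' l = Some e" using h by simp
    then show ?thesis using InvD2[OF assms(1)] by blast
  qed
  have c3: "inj_on (\<lambda>a'. the (st (Suc t) a' l)) {a'. st (Suc t) a' l \<noteq> None}" for l
  proof (cases "l = i")
    case False
    then have e: "st (Suc t) a' l = st t a' l" for a' by (simp add: upd)
    show ?thesis unfolding e by (rule InvD3[OF assms(1)])
  next
    case True
    have inj0: "inj_on (\<lambda>a'. the (st t a' i)) {a'. st t a' i \<noteq> None}" by (rule InvD3[OF assms(1)])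
    show ?thesis unfolding True inj_on_def
    proof (intro ballI impI)
      fix x y assume x: "x \<in> {a'. st (Suc t) a' i \<noteq> None}" and y: "y \<in> {a'. st (Suc t) a' i \<noteq> None}"
        and e: "the (st (Suc t) x i) = the (st (Suc t) y i)"
      show "x = y"
      proof (cases "x = a"; cases "y = a")
        assume "x = a" "y \<noteq> a"
        then have "st t y i \<noteq> None" "the (st t y i) = d" using y e by (simp_all add: upd)
        then have "st t y i = Some d" by auto
        then show ?thesis using dav by (auto simp: avail_items_def)
      next
        assume "x \<noteq> a" "y = a"
        then have "st t x i \<noteq> None" "the (st t x i) = d" using x e by (simp_all add: upd)
        then have "st t x i = Some d" by auto
        then show ?thesis using dav by (auto simp: avail_items_def)
      next
        assume "x \<noteq> a" "y \<noteq> a"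
        then have "st t x i \<noteq> None" "st t y i \<noteq> None" "the (st t x i) = the (st t y i)"
          using x y e by (simp_all add: upd)
        then show ?thesis using inj0 unfolding inj_on_def by blast
      qed simp
    qed
  qed
  show ?thesis unfolding Inv_def using c1 c2 c3 by (intro conjI allI impI) blast+
qed

lemma Inv_all: "t \<le> length Ord \<Longrightarrow> Inv t"
proof (induction t)
  case 0 then show ?case by (simp add: Inv_def st_def)
next
  case (Suc t) then show ?case using Inv_Suc by simp
qed

end

context csam begin

definition pj :: "nat \<Rightarrow> nat" where "pj c = pos Ord (j,c)"
definition A :: "nat \<Rightarrow> nat list set" where "A t = avail_bundles n p (st t) j"
abbreviation "L \<equiv> length Ord"

lemma jc_in: "c < p \<Longrightarrow> (j,c) \<in> set Ord" using sO jn by simp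

lemma pj: "c < p \<Longrightarrow> pj c < L \<and> Ord ! pj c = (j,c)"
  unfolding pj_def using pos_in[OF jc_in] by blast

lemma pj_nth: "t < L \<Longrightarrow> Ord!t = (j,c) \<Longrightarrow> pj c = t"
  unfolding pj_def using pos_nth[OF dO] by metis

lemma fixed_iff: "t \<le> L \<Longrightarrow> c < p \<Longrightarrow> st t j c \<noteq> None \<longleftrightarrow> pj c < t"
  using InvD1[OF Inv_all, of t j c] take_member[of "(j,c)" t] jc_in unfolding pj_def by blast

lemma A_LS: "t \<le> L \<Longrightarrow> A t = LS p (\<lambda>l. case st t j l of Some d \<Rightarrow> {d} | None \<Rightarrow> avail_items n (st t) l)"
  unfolding A_def by (rule avail_bundles_LS[OF Inv_all])

lemma A_R: "A t \<subseteq> set (R j)"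
  unfolding A_def using avail_in_R jn by blast

lemma A_ne: "t \<le> L \<Longrightarrow> \<exists>b. b \<in> A t"
  unfolding A_def using avail_bundles_ne[OF Inv_all jn] by blast

lemma avail_bundlesI: "b \<in> bundles n p \<Longrightarrow>
   (\<And>l. l < p \<Longrightarrow> (case s j l of Some e \<Rightarrow> b!l = e | None \<Rightarrow> b!l \<in> avail_items n s l)) \<Longrightarrow>
   b \<in> avail_bundles n p s j"
  unfolding avail_bundles_def by blast

lemma avail_bundlesD: "b \<in> avail_bundles n p s j \<Longrightarrow> l < p \<Longrightarrow>
   (case s j l of Some e \<Rightarrow> b!l = e | None \<Rightarrow> b!l \<in> avail_items n s l)"
  unfolding avail_bundles_def by blast

lemma avail_bundlesB: "b \<in> avail_bundles n p s j \<Longrightarrow> b \<in> bundles n p"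
  unfolding avail_bundles_def by blast

context
  fixes t a i d
  assumes tl: "t < L" and ai: "Ord!t = (a,i)"
  defines "d \<equiv> choice n p R optimistic (st t) a i"
begin

lemma sf: "st (Suc t) a' l = (if a' = a \<and> l = i then Some d else st t a' l)"
    "st t a i = None" "d \<in> avail_items n (st t) i"
  using step_facts[OF Inv_all tl ai] d_def tl by auto

lemma ext_Suc: "st t a' l = Some x \<Longrightarrow> st (Suc t) a' l = Some x"
  using sf(1)[of a' l] sf(2) by (cases "a' = a \<and> l = i") auto

lemma A_mono_step: "A (Suc t) \<subseteq> A t"
proof
  fix b assume b: "b \<in> A (Suc t)"
  show "b \<in> A t" unfolding A_def
  proof (rule avail_bundlesI)
    show "b \<in> bundles n p" using b unfolding A_def by (rule avail_bundlesB)
  next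
    fix l assume l: "l < p"
    have h: "case st (Suc t) j l of Some e \<Rightarrow> b!l = e | None \<Rightarrow> b!l \<in> avail_items n (st (Suc t)) l"
      using b l unfolding A_def by (rule avail_bundlesD)
    show "case st t j l of Some e \<Rightarrow> b!l = e | None \<Rightarrow> b!l \<in> avail_items n (st t) l"
    proof (cases "st t j l")
      case (Some e)
      then have "st (Suc t) j l = Some e" by (rule ext_Suc)
      then show ?thesis using h Some by simp
    next
      case None
      show ?thesis
      proof (cases "j = a \<and> l = i")
        case True
        then have "st (Suc t) j l = Some d" using sf(1) by simp
        then have "b!l = d" using h by simp
        then show ?thesis using None True sf(3) by simp
      next
        case False
        then have "st (Suc t) j l = None" using sf(1)[of j l] None by simp
        then have "b!l \<in> avail_items n (st (Suc t)) l" using h by simp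
        then have "b!l \<in> avail_items n (st t) l" by (rule avail_mono[rotated]) (rule ext_Suc)
        then show ?thesis using None by simp
      qed
    qed
  qed
qed

lemma keep_other: assumes "l \<noteq> i" "x \<in> avail_items n (st t) l" shows "x \<in> avail_items n (st (Suc t)) l"
proof (rule avail_keep[where s="st t" and s'="st (Suc t)", OF _ assms(2)])
  fix a' assume "st (Suc t) a' l = Some x" then show "st t a' l = Some x" using sf(1)[of a' l] assms(1) by simp
qed

lemma A_jstep: assumes "a = j" shows "A (Suc t) = {b \<in> A t. b!i = d}"
proof
  have ip: "i < p" using nth_mem[OF tl] ai sO by auto
  show "A (Suc t) \<subseteq> {b \<in> A t. b!i = d}"
  proof
    fix b assume b: "b \<in> A (Suc t)"
    have "case st (Suc t) j i of Some e \<Rightarrow> b!i = e | None \<Rightarrow> b!i \<in> avail_items n (st (Suc t)) i"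
      using b ip unfolding A_def by (rule avail_bundlesD)
    moreover have "st (Suc t) j i = Some d" using sf(1) assms by simp
    ultimately show "b \<in> {b \<in> A t. b!i = d}" using b A_mono_step by auto
  qed
next
  show "{b \<in> A t. b!i = d} \<subseteq> A (Suc t)"
  proof
    fix b assume b: "b \<in> {b \<in> A t. b!i = d}"
    show "b \<in> A (Suc t)" unfolding A_def
    proof (rule avail_bundlesI)
      show "b \<in> bundles n p" using b unfolding A_def by (blast intro: avail_bundlesB)
    next
      fix l assume l: "l < p"
      have h: "case st t j l of Some e \<Rightarrow> b!l = e | None \<Rightarrow> b!l \<in> avail_items n (st t) l"
        using b l unfolding A_def by (blast intro: avail_bundlesD)
      show "case st (Suc t) j l of Some e \<Rightarrow> b!l = e | None \<Rightarrow> b!l \<in> avail_items n (st (Suc t)) l"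
      proof (cases "l = i")
        case True
        then show ?thesis using sf(1) assms b by simp
      next
        case False
        then have e: "st (Suc t) j l = st t j l" using sf(1) by simp
        show ?thesis
        proof (cases "st t j l")
          case (Some e') then show ?thesis using e h by simp
        next
          case None then show ?thesis using e h keep_other[OF False] by simp
        qed
      qed
    qed
  qed
qed

lemma A_other: assumes "a \<noteq> j" "st t j i \<noteq> None" "b \<in> A t" shows "b \<in> A (Suc t)"
  unfolding A_def
proof (rule avail_bundlesI)
  show "b \<in> bundles n p" using assms(3) unfolding A_def by (rule avail_bundlesB)
next
  fix l assume l: "l < p"
  have h: "case st t j l of Some e \<Rightarrow> b!l = e | None \<Rightarrow> b!l \<in> avail_items n (st t) l"
    using assms(3) l unfolding A_def by (rule avail_bundlesD)
  have e: "st (Suc t) j l = st t j l" using sf(1) assms(1) by simp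
  show "case st (Suc t) j l of Some e \<Rightarrow> b!l = e | None \<Rightarrow> b!l \<in> avail_items n (st (Suc t)) l"
  proof (cases "st t j l")
    case (Some e') then show ?thesis using e h by simp
  next
    case None
    then have "l \<noteq> i" using assms(2) by auto
    then show ?thesis using e h None keep_other by simp
  qed
qed

end

lemma A_mono: "t \<le> t' \<Longrightarrow> t' \<le> L \<Longrightarrow> A t' \<subseteq> A t"
proof (induction t' rule: dec_induct)
  case base then show ?case by simp
next
  case (step m)
  obtain a i where "Ord!m = (a,i)" by (cases "Ord!m") auto
  then have "A (Suc m) \<subseteq> A m" using A_mono_step[of m] step by simp
  then show ?case using step by simp
qed


definition W :: "nat \<Rightarrow> nat" where
  "W t = Rank (R j) (last (filter (\<lambda>b. b \<in> A t) (R j)))"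

lemma W_ge: assumes "b \<in> A t" shows "Rank (R j) b \<le> W t"
proof -
  have "b \<in> set (R j)" using assms A_R by blast
  then have "pos (R j) b \<le> pos (R j) (last (filter (\<lambda>b. b \<in> A t) (R j)))"
    by (rule last_filter_ge[OF dR[OF jn]]) (rule assms)
  then show ?thesis unfolding W_def Rank_def by simp
qed

lemma Rank_le: "b \<in> set (R j) \<Longrightarrow> Rank (R j) b \<le> n ^ p"
  unfolding Rank_def using pos_in[of b "R j"] lenR[OF jn] by simp

lemma kk_eq: "c < p \<Longrightarrow> kk n Ord j c = card (avail_items n (st (pj c)) c)"
proof -
  assume c: "c < p"
  have "{a. (a,c) \<in> set (take (pj c) Ord)} = {a. (a, c) \<in> set Ord \<and> pos Ord (a, c) < pos Ord (j, c)}"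
    unfolding pj_def take_member by simp
  then show ?thesis unfolding kk_def using avail_card[OF Inv_all, of "pj c" c] pj[OF c] by simp
qed

lemma avail_finite: "finite (avail_items n s l)"
proof -
  have "avail_items n s l \<subseteq> {..<n}" unfolding avail_items_def by blast
  then show ?thesis using finite_subset by blast
qed

lemma kk_pos: "c < p \<Longrightarrow> 1 \<le> kk n Ord j c"
proof -
  assume c: "c < p"
  have "(j,c) \<notin> set (take (pj c) Ord)" unfolding take_member pj_def by simp
  then have "avail_items n (st (pj c)) c \<noteq> {}" using avail_nonempty[OF Inv_all jc_in[OF c]] pj[OF c] by simp
  then have "card (avail_items n (st (pj c)) c) > 0" using avail_finite by (simp add: card_gt_0_iff)
  then show ?thesis using kk_eq[OF c] by simp
qed

lemma pess_step: assumes "\<not> optimistic j" "t < L" "Ord!t = (j,i)"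
  shows "W (Suc t) + (kk n Ord j i - 1) \<le> W t"
proof -
  let ?s = "st t"
  let ?AV = "avail_items n ?s i"
  define d where "d = choice n p R optimistic ?s j i"
  have ip: "i < p" using nth_mem[OF assms(2)] assms(3) sO by auto
  have ptj: "pj i = t" using pj_nth[OF assms(2,3)] .
  have kAV: "kk n Ord j i = card ?AV" using kk_eq[OF ip] ptj by simp
  have none: "st t j i = None" using sf(2)[OF assms(2,3)] .
  have dAV: "d \<in> ?AV" using sf(3)[OF assms(2,3)] d_def by simp
  define w where "w d' = worst_with n p (R j) ?s j i d'" for d'
  define g where "g d' = Rank (R j) (w d')" for d'
  have dd: "d = (ARG_MIN g d'. d' \<in> ?AV)"
    using assms(1) unfolding d_def choice_def pess_choice_def g_def w_def by simp
  have gmin: "g d \<le> g d'" if "d' \<in> ?AV" for d'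
    unfolding dd by (rule arg_min_nat_le) (rule that)
  have Lt: "t \<le> L" using assms(2) by simp
  have w_in: "w d' \<in> A t \<and> w d' ! i = d' \<and> w d' \<in> set (R j)" if d': "d' \<in> ?AV" for d'
  proof -
    let ?S = "\<lambda>l. case st t j l of Some d \<Rightarrow> {d} | None \<Rightarrow> avail_items n (st t) l"
    let ?b = "map (\<lambda>l. SOME x. x \<in> (?S(i := {d'})) l) [0..<p]"
    have "\<forall>l<p. (?S(i := {d'})) l \<noteq> {}" using Sf_nonempty[OF Inv_all[OF Lt] jn] by simp
    then have b: "?b \<in> LS p (?S(i := {d'}))" by (rule LS_nonempty)
    have "?b \<in> LS p ?S" unfolding LS_def
    proof (intro CollectI conjI allI impI)
      show "length ?b = p" by simp
      fix l assume l: "l < p"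
      have bl: "?b ! l \<in> (?S(i := {d'})) l" using b l unfolding LS_def by blast
      show "?b ! l \<in> ?S l"
      proof (cases "l = i")
        case True
        then have "?b ! l = d'" using bl by simp
        then show ?thesis using True none d' by simp
      next
        case False then show ?thesis using bl by simp
      qed
    qed
    then have bA: "?b \<in> A t" using A_LS[OF Lt] by simp
    have bi: "?b ! i = d'" using b ip unfolding LS_def by auto
    have bR: "?b \<in> set (R j)" using bA A_R by blast
    have lf: "last (filter (\<lambda>b. b \<in> A t \<and> b!i = d') (R j)) \<in> set (R j) \<and> (last (filter (\<lambda>b. b \<in> A t \<and> b!i = d') (R j)) \<in> A t \<and> last (filter (\<lambda>b. b \<in> A t \<and> b!i = d') (R j)) ! i = d')"
      by (rule last_filter_in[OF bR, of "\<lambda>b. b \<in> A t \<and> b!i = d'"]) (rule conjI[OF bA bi])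
    have "w d' = last (filter (\<lambda>b. b \<in> A t \<and> b!i = d') (R j))" unfolding w_def worst_with_def A_def by simp
    then show ?thesis using lf by simp
  qed
  have gW: "g d' \<le> W t" if "d' \<in> ?AV" for d'
    unfolding g_def using w_in[OF that] by (intro W_ge) simp
  have ginj: "inj_on g ?AV"
  proof
    fix x y assume x: "x \<in> ?AV" and y: "y \<in> ?AV" and e: "g x = g y"
    then have pe: "pos (R j) (w x) = pos (R j) (w y)" unfolding g_def Rank_def by simp
    have wx: "w x \<in> set (R j)" using w_in[OF x] by simp
    have wy: "w y \<in> set (R j)" using w_in[OF y] by simp
    have wxy: "w x = w y" by (rule pos_inj[OF wx wy pe])
    have "x = w x ! i" using w_in[OF x] by simp
    also have "\<dots> = w y ! i" using wxy by simp
    also have "\<dots> = y" using w_in[OF y] by simp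
    finally show "x = y" .
  qed
  have "g ` ?AV \<subseteq> {g d..W t}" using gmin gW by auto
  then have "card (g ` ?AV) \<le> card {g d..W t}" by (intro card_mono) auto
  then have cAV: "card ?AV \<le> Suc (W t) - g d" using card_image[OF ginj] by simp
  have "A (Suc t) = {b \<in> A t. b!i = d}" using A_jstep[OF assms(2,3)] d_def by simp
  then have "(\<lambda>b. b \<in> A (Suc t)) = (\<lambda>b. b \<in> A t \<and> b!i = d)" by auto
  then have WS: "W (Suc t) = g d" unfolding W_def g_def w_def worst_with_def A_def by simp
  have "g d \<le> W t" using gW dAV by simp
  then show ?thesis using WS kAV cAV by linarith
qed

lemma W_mono_step: assumes "t < L" shows "W (Suc t) \<le> W t"
proof -
  obtain a i where ai: "Ord!t = (a,i)" by (cases "Ord!t") auto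
  obtain b where b: "b \<in> A (Suc t)" using A_ne[of "Suc t"] assms by auto
  have bR: "b \<in> set (R j)" using b A_R by blast
  have "last (filter (\<lambda>b. b \<in> A (Suc t)) (R j)) \<in> set (R j) \<and> last (filter (\<lambda>b. b \<in> A (Suc t)) (R j)) \<in> A (Suc t)"
    by (rule last_filter_in[OF bR]) (rule b)
  then have "last (filter (\<lambda>b. b \<in> A (Suc t)) (R j)) \<in> A (Suc t)" by (rule conjunct2)
  then have "last (filter (\<lambda>b. b \<in> A (Suc t)) (R j)) \<in> A t" using A_mono_step[OF assms ai] by (rule subsetD[rotated])
  then have "Rank (R j) (last (filter (\<lambda>b. b \<in> A (Suc t)) (R j))) \<le> W t" by (rule W_ge)
  then show ?thesis unfolding W_def .
qed

lemma W_bound: assumes "t \<le> L" shows "W t \<le> n ^ p"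
proof -
  obtain b where b: "b \<in> A t" using A_ne[OF assms] by auto
  have bR: "b \<in> set (R j)" using b A_R by blast
  have "last (filter (\<lambda>b. b \<in> A t) (R j)) \<in> set (R j) \<and> last (filter (\<lambda>b. b \<in> A t) (R j)) \<in> A t"
    by (rule last_filter_in[OF bR]) (rule b)
  then have "last (filter (\<lambda>b. b \<in> A t) (R j)) \<in> set (R j)" by (rule conjunct1)
  then show ?thesis unfolding W_def by (rule Rank_le)
qed

lemma pess_main: assumes "\<not> optimistic j"
  shows "t \<le> L \<Longrightarrow> W t + (\<Sum>c\<in>{c. c < p \<and> pj c < t}. kk n Ord j c - 1) \<le> n ^ p"
proof (induction t)
  case 0
  have e: "{c. c < p \<and> pj c < 0} = {}" by simp
  show ?case unfolding e using W_bound[of 0] by simp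
next
  case (Suc t)
  then have tL: "t < L" by simp
  have IH: "W t + (\<Sum>c\<in>{c. c < p \<and> pj c < t}. kk n Ord j c - 1) \<le> n ^ p" using Suc tL by simp
  have fin: "finite {c. c < p \<and> pj c < t}" by simp
  obtain a i where ai: "Ord!t = (a,i)" by (cases "Ord!t") auto
  show ?case
  proof (cases "a = j")
    case True
    have ip: "i < p" using nth_mem[OF tL] ai sO by auto
    have ptj: "pj i = t" using pj_nth[OF tL] ai True by simp
    have set: "{c. c < p \<and> pj c < Suc t} = insert i {c. c < p \<and> pj c < t}"
    proof (intro set_eqI iffI)
      fix c assume c: "c \<in> {c. c < p \<and> pj c < Suc t}"
      show "c \<in> insert i {c. c < p \<and> pj c < t}"
      proof (cases "pj c = t")
        case True
        then have "(j,c) = (j,i)" using pj[of c] c ai \<open>a = j\<close> by simp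
        then show ?thesis by simp
      next
        case False then show ?thesis using c by simp
      qed
    next
      fix c assume "c \<in> insert i {c. c < p \<and> pj c < t}"
      then show "c \<in> {c. c < p \<and> pj c < Suc t}" using ip ptj by auto
    qed
    have ni: "i \<notin> {c. c < p \<and> pj c < t}" using ptj by simp
    have S: "(\<Sum>c\<in>{c. c < p \<and> pj c < Suc t}. kk n Ord j c - 1) = (kk n Ord j i - 1) + (\<Sum>c\<in>{c. c < p \<and> pj c < t}. kk n Ord j c - 1)"
      unfolding set by (rule sum.insert[OF fin ni])
    have st: "W (Suc t) + (kk n Ord j i - 1) \<le> W t" using pess_step[OF assms tL] ai True by simp
    show ?thesis unfolding S using st IH by linarith
  next
    case False
    have set: "{c. c < p \<and> pj c < Suc t} = {c. c < p \<and> pj c < t}"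
    proof (intro set_eqI iffI)
      fix c assume c: "c \<in> {c. c < p \<and> pj c < Suc t}"
      have "pj c \<noteq> t"
      proof
        assume "pj c = t"
        then have "(j,c) = (a,i)" using pj[of c] c ai by simp
        then show False using False by simp
      qed
      then show "c \<in> {c. c < p \<and> pj c < t}" using c by simp
    qed simp
    show ?thesis unfolding set using W_mono_step[OF tL] IH by linarith
  qed
qed

end

context csam begin

lemma st_L: "st L = run n p R optimistic Ord (\<lambda>_ _. None)"
  unfolding st_def by simp

definition fb :: "nat list" where "fb = CSAM n p Ord optimistic R j"

lemma fb_eq: "fb = map (\<lambda>l. the (st L j l)) [0..<p]"
  unfolding fb_def CSAM_def Let_def st_L ..

lemma fixedL: "l < p \<Longrightarrow> \<exists>e. st L j l = Some e"
  using fixed_iff[of L l] pj[of l] by auto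

lemma fb_nth: "l < p \<Longrightarrow> st L j l = Some e \<Longrightarrow> fb ! l = e"
  unfolding fb_eq by simp

lemma fb_in: "fb \<in> A L"
  unfolding A_def
proof (rule avail_bundlesI)
  show "fb \<in> bundles n p" unfolding bundles_def
  proof (intro CollectI conjI allI impI)
    show "length fb = p" unfolding fb_eq by simp
    fix l assume l: "l < p"
    obtain e where e: "st L j l = Some e" using fixedL[OF l] by blast
    then have "e < n" using InvD2[OF Inv_all[of L]] by simp
    then show "fb ! l < n" using fb_nth[OF l e] by simp
  qed
next
  fix l assume l: "l < p"
  obtain e where e: "st L j l = Some e" using fixedL[OF l] by blast
  then show "case st L j l of Some e \<Rightarrow> fb!l = e | None \<Rightarrow> fb!l \<in> avail_items n (st L) l"
    using fb_nth[OF l e] by simp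
qed

lemma fb_unique: assumes "b \<in> A L" shows "b = fb"
proof (rule nth_equalityI)
  have "b \<in> bundles n p" using assms unfolding A_def by (rule avail_bundlesB)
  then show "length b = length fb" unfolding fb_eq bundles_def by simp
  fix l assume "l < length b"
  then have l: "l < p" using \<open>b \<in> bundles n p\<close> unfolding bundles_def by simp
  obtain e where e: "st L j l = Some e" using fixedL[OF l] by blast
  have "case st L j l of Some e \<Rightarrow> b!l = e | None \<Rightarrow> b!l \<in> avail_items n (st L) l"
    using assms l unfolding A_def by (rule avail_bundlesD)
  then have "b!l = e" using e by simp
  then show "b ! l = fb ! l" using fb_nth[OF l e] by simp
qed

lemma pess_final: assumes "\<not> optimistic j"
  shows "Rank (R j) fb + (\<Sum>c<p. kk n Ord j c - 1) \<le> n ^ p"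
proof -
  have e: "{c. c < p \<and> pj c < L} = {..<p}" using pj by auto
  have "W L + (\<Sum>c<p. kk n Ord j c - 1) \<le> n ^ p" using pess_main[OF assms, of L] unfolding e by simp
  moreover have "Rank (R j) fb \<le> W L" using fb_in by (rule W_ge)
  ultimately show ?thesis by linarith
qed

definition F :: "(nat \<times> nat) list" where "F = filter (\<lambda>x. fst x = j) Ord"

lemma OjF: "Oj Ord j = map snd F" unfolding Oj_def F_def ..

lemma setF: "set F = {j} \<times> {0..<p}" unfolding F_def using sO jn by auto

lemma distF: "distinct F" unfolding F_def using dO by simp

lemma Oj_dist: "distinct (Oj Ord j)"
proof -
  have "inj_on snd (set F)" unfolding setF by (auto simp: inj_on_def)
  then show ?thesis unfolding OjF using distF by (simp add: distinct_map)
qed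

lemma Oj_set: "set (Oj Ord j) = {0..<p}"
  unfolding OjF set_map setF by auto

lemma Oj_len: "length (Oj Ord j) = p"
  using distinct_card[OF Oj_dist] Oj_set by simp

lemma lenF: "length F = p" using Oj_len unfolding OjF by simp

lemma F_nth: "l < p \<Longrightarrow> F ! l = (j, Oj Ord j ! l)"
proof -
  assume l: "l < p"
  then have "F ! l \<in> set F" using lenF by simp
  then have "fst (F ! l) = j" unfolding setF by auto
  moreover have "Oj Ord j ! l = snd (F ! l)" unfolding OjF using l lenF by simp
  ultimately show ?thesis by (cases "F ! l") simp
qed

lemma Ord_sorted: "sorted_wrt (\<lambda>x y. pos Ord x < pos Ord y) Ord"
  unfolding sorted_wrt_iff_nth_less using pos_nth[OF dO] by simp

lemma Oj_order: assumes "l < l'" "l' < p" shows "pj (Oj Ord j ! l) < pj (Oj Ord j ! l')"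
proof -
  have "sorted_wrt (\<lambda>x y. pos Ord x < pos Ord y) F" unfolding F_def by (rule sorted_wrt_filter[OF Ord_sorted])
  then have "pos Ord (F ! l) < pos Ord (F ! l')" unfolding sorted_wrt_iff_nth_less using assms lenF by simp
  then show ?thesis unfolding pj_def using F_nth assms by simp
qed

lemma Oj_bij: "bij_betw (\<lambda>l. Oj Ord j ! (l - 1)) {1..p} {0..<p}"
  unfolding bij_betw_def
proof
  show "inj_on (\<lambda>l. Oj Ord j ! (l - 1)) {1..p}"
  proof
    fix x y assume x: "x \<in> {1..p}" and y: "y \<in> {1..p}" and e: "Oj Ord j ! (x - 1) = Oj Ord j ! (y - 1)"
    have xl: "x - 1 < length (Oj Ord j)" using x Oj_len by auto
    have yl: "y - 1 < length (Oj Ord j)" using y Oj_len by auto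
    have "x - 1 = y - 1" using nth_eq_iff_index_eq[OF Oj_dist xl yl] e by simp
    then show "x = y" using x y by auto
  qed
  show "(\<lambda>l. Oj Ord j ! (l - 1)) ` {1..p} = {0..<p}"
  proof (intro set_eqI iffI)
    fix c assume "c \<in> (\<lambda>l. Oj Ord j ! (l - 1)) ` {1..p}"
    then obtain l where l: "l \<in> {1..p}" "c = Oj Ord j ! (l - 1)" by blast
    have "l - 1 < length (Oj Ord j)" using l(1) Oj_len by auto
    then have "c \<in> set (Oj Ord j)" unfolding l(2) by (rule nth_mem)
    then show "c \<in> {0..<p}" using Oj_set by simp
  next
    fix c assume "c \<in> {0..<p}"
    then have "c \<in> set (Oj Ord j)" using Oj_set by simp
    then obtain m where m: "m < p" "Oj Ord j ! m = c" using Oj_len by (auto simp: in_set_conv_nth)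
    then show "c \<in> (\<lambda>l. Oj Ord j ! (l - 1)) ` {1..p}" by (intro image_eqI[of _ _ "Suc m"]) auto
  qed
qed

lemma pess_thm: assumes "\<not> optimistic j"
  shows "int (Rank (R j) (CSAM n p Ord optimistic R j))
              \<le> int n ^ p - (\<Sum>l\<in>{1..p}. int (kk n Ord j (Oj Ord j ! (l - 1))) - 1)"
proof -
  have "(\<Sum>l\<in>{1..p}. int (kk n Ord j (Oj Ord j ! (l - 1))) - 1) = (\<Sum>c\<in>{0..<p}. int (kk n Ord j c) - 1)"
    by (rule sum.reindex_bij_betw[OF Oj_bij])
  also have "\<dots> = (\<Sum>c\<in>{0..<p}. int (kk n Ord j c - 1))"
    using kk_pos by (intro sum.cong) (auto simp: of_nat_diff)
  also have "\<dots> = int (\<Sum>c<p. kk n Ord j c - 1)" by (simp add: atLeast0LessThan)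
  finally have S: "(\<Sum>l\<in>{1..p}. int (kk n Ord j (Oj Ord j ! (l - 1))) - 1) = int (\<Sum>c<p. kk n Ord j c - 1)" .
  have "int (Rank (R j) fb) + int (\<Sum>c<p. kk n Ord j c - 1) \<le> int (n ^ p)"
    using pess_final[OF assms] by linarith
  then show ?thesis unfolding S fb_def by simp
qed


abbreviation "K \<equiv> KK p Ord j"
abbreviation "t0 \<equiv> pj (Oj Ord j ! (K - 1))"

lemma KK_prop: "1 \<le> K \<and> K \<le> p \<and> (\<forall>l. K < l \<and> l \<le> p \<longrightarrow>
        \<not> (\<exists>t. pos Ord (j, Oj Ord j ! (K - 1)) < t \<and> t < pos Ord (j, Oj Ord j ! (l - 1)) \<and>
               snd (Ord ! t) = Oj Ord j ! (l - 1)))"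
  unfolding KK_def by (rule LeastI[of _ p]) (use p1 in auto)

lemma K1: "1 \<le> K" and Kp: "K \<le> p" using KK_prop by auto

lemma gap: "K < l \<Longrightarrow> l \<le> p \<Longrightarrow> t0 < u \<Longrightarrow> u < pj (Oj Ord j ! (l - 1)) \<Longrightarrow> snd (Ord ! u) \<noteq> Oj Ord j ! (l - 1)"
  using KK_prop unfolding pj_def by blast

lemma Ojp: "m < p \<Longrightarrow> Oj Ord j ! m < p"
  using nth_mem[of m "Oj Ord j"] Oj_len Oj_set by auto

lemma t0: "t0 < L" "Ord ! t0 = (j, Oj Ord j ! (K - 1))"
  using pj[OF Ojp[of "K - 1"]] K1 Kp by auto

lemma pj_ge: "K \<le> l \<Longrightarrow> l \<le> p \<Longrightarrow> t0 \<le> pj (Oj Ord j ! (l - 1))"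
proof -
  assume a: "K \<le> l" "l \<le> p"
  show ?thesis
  proof (cases "l = K")
    case False
    then have "K - 1 < l - 1" "l - 1 < p" using a K1 by auto
    then show ?thesis using Oj_order by fastforce
  qed simp
qed

definition bs :: "nat list" where "bs = hd (filter (\<lambda>b. b \<in> A t0) (R j))"

lemma bs_in: "bs \<in> A t0 \<and> bs \<in> set (R j)"
proof -
  obtain b where b: "b \<in> A t0" using A_ne t0(1) by fastforce
  have bR: "b \<in> set (R j)" using b A_R by blast
  have "hd (filter (\<lambda>b. b \<in> A t0) (R j)) \<in> set (R j) \<and> hd (filter (\<lambda>b. b \<in> A t0) (R j)) \<in> A t0"
    by (rule hd_filter_in[OF bR]) (rule b)
  then show ?thesis unfolding bs_def by blast
qed

lemma opt_stay: assumes opt: "optimistic j" and "t0 \<le> t" "t \<le> L" shows "bs \<in> A t"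
  using assms(2,3)
proof (induction t rule: dec_induct)
  case base then show ?case using bs_in by blast
next
  case (step m)
  have tl: "m < L" using step by simp
  have IH: "bs \<in> A m" using step by simp
  obtain a i where ai: "Ord!m = (a,i)" by (cases "Ord!m") auto
  have ip: "i < p" using nth_mem[OF tl] ai sO by auto
  have bsR: "bs \<in> set (R j)" using bs_in by blast
  show ?case
  proof (cases "a = j")
    case True
    let ?h = "hd (filter (\<lambda>b. b \<in> A m) (R j))"
    have hh: "?h \<in> set (R j) \<and> ?h \<in> A m" by (rule hd_filter_in[OF bsR]) (rule IH)
    have "A m \<subseteq> A t0" using A_mono step tl by simp
    then have h0: "?h \<in> A t0" using hh by blast
    have p1': "pos (R j) ?h \<le> pos (R j) bs" by (rule hd_filter_le[OF bsR]) (rule IH)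
    have hR: "?h \<in> set (R j)" using hh by blast
    have "pos (R j) bs \<le> pos (R j) ?h" unfolding bs_def by (rule hd_filter_le[OF hR]) (rule h0)
    then have "pos (R j) ?h = pos (R j) bs" using p1' by simp
    then have hb: "?h = bs" by (rule pos_inj[OF hR bsR])
    have dd: "choice n p R optimistic (st m) j i = bs ! i"
      using opt hb unfolding choice_def opt_choice_def A_def by simp
    have "A (Suc m) = {b \<in> A m. b!i = choice n p R optimistic (st m) j i}"
      using A_jstep[OF tl] ai True by simp
    then show ?thesis using IH dd by simp
  next
    case False
    show ?thesis
    proof (cases "st m j i = None")
      case False': False
      show ?thesis by (rule A_other[OF tl ai \<open>a \<noteq> j\<close> False' IH])
    next
      case True
      have "\<not> pj i < m" using fixed_iff[of m i] tl ip True by simp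
      moreover have "pj i \<noteq> m"
      proof
        assume "pj i = m" then show False using pj[OF ip] ai \<open>a \<noteq> j\<close> by simp
      qed
      ultimately have mpi: "m < pj i" by simp
      have "i \<in> set (Oj Ord j)" using Oj_set ip by simp
      then obtain m' where m': "m' < p" "Oj Ord j ! m' = i" using Oj_len by (auto simp: in_set_conv_nth)
      have mt0: "m \<noteq> t0" using t0(2) ai \<open>a \<noteq> j\<close> by auto
      show ?thesis
      proof (cases "m' < K - 1")
        case True
        have "pj (Oj Ord j ! m') < t0" using Oj_order[OF True] K1 Kp by simp
        then show ?thesis using m' mpi step by simp
      next
        case False
        show ?thesis
        proof (cases "m' = K - 1")
          case True then show ?thesis using m' mpi step by simp
        next
          case False2: False
          have l: "K < Suc m'" "Suc m' \<le> p" using False False2 m' by auto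
          have "snd (Ord ! m) \<noteq> Oj Ord j ! (Suc m' - 1)"
            by (rule gap[OF l]) (use step mt0 mpi m' in auto)
          then show ?thesis using ai m' by simp
        qed
      qed
    qed
  qed
qed

lemma opt_final: "optimistic j \<Longrightarrow> bs = fb"
  using fb_unique opt_stay[of L] t0 by simp

lemma rank_bs: "Rank (R j) bs + card (A t0) \<le> n ^ p + 1"
proof -
  have bsR: "bs \<in> set (R j)" and bA: "bs \<in> A t0" using bs_in by blast+
  have "pos (R j) bs + length (filter (\<lambda>b. b \<in> A t0) (R j)) \<le> length (R j)"
    unfolding bs_def by (rule hd_filter_len[OF bsR]) (rule bA)
  moreover have "length (filter (\<lambda>b. b \<in> A t0) (R j)) = card (A t0)"
  proof -
    have "{x. x \<in> A t0} \<inter> set (R j) = A t0" using A_R by blast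
    then show ?thesis using distinct_length_filter[OF dR[OF jn]] by metis
  qed
  ultimately show ?thesis unfolding Rank_def using lenR[OF jn] by simp
qed

lemma set_eq_t0: assumes "K \<le> l" "l \<le> p"
  shows "{a. (a, Oj Ord j ! (l - 1)) \<in> set (take t0 Ord)} = {a. (a, Oj Ord j ! (l - 1)) \<in> set (take (pj (Oj Ord j ! (l - 1))) Ord)}"
proof -
  let ?x = "Oj Ord j ! (l - 1)"
  have ge: "t0 \<le> pj ?x" by (rule pj_ge[OF assms])
  have "pos Ord (a, ?x) < t0 \<longleftrightarrow> pos Ord (a, ?x) < pj ?x" if ax: "(a, ?x) \<in> set Ord" for a
  proof
    assume "pos Ord (a, ?x) < t0" then show "pos Ord (a, ?x) < pj ?x" using ge by simp
  next
    assume u: "pos Ord (a, ?x) < pj ?x"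
    show "pos Ord (a, ?x) < t0"
    proof (rule ccontr)
      assume "\<not> pos Ord (a, ?x) < t0"
      then have ut: "t0 \<le> pos Ord (a, ?x)" by simp
      have Ou: "Ord ! pos Ord (a, ?x) = (a, ?x)" using pos_in[OF ax] by blast
      show False
      proof (cases "l = K")
        case True then show False using u ut by simp
      next
        case False
        then have lK: "K < l" using assms by simp
        show False
        proof (cases "pos Ord (a, ?x) = t0")
          case True
          then have "?x = Oj Ord j ! (K - 1)" using Ou t0(2) by simp
          moreover have "l - 1 < length (Oj Ord j)" "K - 1 < length (Oj Ord j)" using assms K1 Oj_len by auto
          ultimately have "l - 1 = K - 1" using nth_eq_iff_index_eq[OF Oj_dist] by blast
          then show False using lK K1 by simp
        next
          case False
          then have "t0 < pos Ord (a, ?x)" using ut by simp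
          then have "snd (Ord ! pos Ord (a, ?x)) \<noteq> ?x" using gap[OF lK assms(2) _ u] by blast
          then show False using Ou by simp
        qed
      qed
    qed
  qed
  then show ?thesis unfolding take_member by blast
qed

lemma card_A0: "(\<Prod>l\<in>{K..p}. kk n Ord j (Oj Ord j ! (l - 1))) \<le> card (A t0)"
proof -
  let ?S = "\<lambda>l. case st t0 j l of Some d \<Rightarrow> {d} | None \<Rightarrow> avail_items n (st t0) l"
  let ?f = "\<lambda>x. card (?S x)"
  let ?h = "\<lambda>l. Oj Ord j ! (l - 1)"
  let ?C = "?h ` {K..p}"
  have t0L: "t0 \<le> L" using t0 by simp
  have cA: "card (A t0) = (\<Prod>x<p. ?f x)" unfolding A_LS[OF t0L] card_LS ..
  have injh: "inj_on ?h {K..p}"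
    by (rule inj_on_subset[OF bij_betw_imp_inj_on[OF Oj_bij]]) (use K1 in auto)
  have Csub: "?C \<subseteq> {..<p}" using K1 Ojp by auto
  have fC: "?f (?h l) = kk n Ord j (?h l)" if l: "l \<in> {K..p}" for l
  proof -
    have lp: "K \<le> l" "l \<le> p" using l by auto
    have xp: "?h l < p" using Ojp lp K1 by simp
    have "\<not> pj (?h l) < t0" using pj_ge[OF lp] by simp
    then have none: "st t0 j (?h l) = None" using fixed_iff[OF t0L xp] by simp
    have "?f (?h l) = card (avail_items n (st t0) (?h l))" using none by simp
    also have "\<dots> = n - card {a. (a, ?h l) \<in> set (take t0 Ord)}" by (rule avail_card[OF Inv_all[OF t0L]])
    also have "\<dots> = n - card {a. (a, ?h l) \<in> set (take (pj (?h l)) Ord)}" using set_eq_t0[OF lp] by simp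
    also have "\<dots> = card (avail_items n (st (pj (?h l))) (?h l))"
      using avail_card[OF Inv_all, of "pj (?h l)" "?h l"] pj[OF xp] by simp
    also have "\<dots> = kk n Ord j (?h l)" using kk_eq[OF xp] by simp
    finally show ?thesis .
  qed
  have f1: "1 \<le> ?f x" if "x \<in> {..<p} - ?C" for x
  proof -
    have xp: "x < p" using that by simp
    have ne: "?S x \<noteq> {}" using Sf_nonempty[OF Inv_all[OF t0L] jn xp] .
    have fin: "finite (?S x)" using avail_finite by (cases "st t0 j x") auto
    show ?thesis using ne fin by (simp add: Suc_le_eq card_gt_0_iff)
  qed
  have "(\<Prod>x<p. ?f x) = (\<Prod>x\<in>{..<p} - ?C. ?f x) * (\<Prod>x\<in>?C. ?f x)"
    by (rule prod.subset_diff[OF Csub]) simp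
  moreover have "1 \<le> (\<Prod>x\<in>{..<p} - ?C. ?f x)" using f1 by (rule prod_ge_1)
  ultimately have "(\<Prod>x\<in>?C. ?f x) \<le> (\<Prod>x<p. ?f x)" by simp
  moreover have "(\<Prod>x\<in>?C. ?f x) = (\<Prod>l\<in>{K..p}. ?f (?h l))" by (rule prod.reindex[OF injh, unfolded comp_def])
  moreover have "(\<Prod>l\<in>{K..p}. ?f (?h l)) = (\<Prod>l\<in>{K..p}. kk n Ord j (?h l))" using fC by (rule prod.cong[OF refl])
  ultimately show ?thesis using cA by simp
qed

lemma opt_thm: assumes "optimistic j"
  shows "int (Rank (R j) (CSAM n p Ord optimistic R j))
              \<le> int n ^ p + 1 - (\<Prod>l\<in>{KK p Ord j..p}. int (kk n Ord j (Oj Ord j ! (l - 1))))"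
proof -
  have "Rank (R j) fb + (\<Prod>l\<in>{K..p}. kk n Ord j (Oj Ord j ! (l - 1))) \<le> n ^ p + 1"
    using rank_bs card_A0 opt_final[OF assms] by simp
  then have "int (Rank (R j) fb + (\<Prod>l\<in>{K..p}. kk n Ord j (Oj Ord j ! (l - 1)))) \<le> int (n ^ p + 1)"
    by (simp only: of_nat_le_iff)
  then have "int (Rank (R j) fb) + int (\<Prod>l\<in>{K..p}. kk n Ord j (Oj Ord j ! (l - 1))) \<le> int n ^ p + 1"
    by simp
  then show ?thesis unfolding fb_def by (simp add: of_nat_prod)
qed

end

theorem proposition1:
  fixes n p :: nat and Ord :: "(nat \<times> nat) list" and optimistic :: "nat \<Rightarrow> bool"
    and R :: "nat \<Rightarrow> nat list list" and j :: nat
  assumes "1 \<le> p"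
    and "is_order n p Ord"
    and "\<forall>a<n. is_linear_order n p (R a)"
    and "j < n"
  shows "(optimistic j \<longrightarrow>
            int (Rank (R j) (CSAM n p Ord optimistic R j))
              \<le> int n ^ p + 1 - (\<Prod>l\<in>{KK p Ord j..p}. int (kk n Ord j (Oj Ord j ! (l - 1)))))
       \<and> (\<not> optimistic j \<longrightarrow>
            int (Rank (R j) (CSAM n p Ord optimistic R j))
              \<le> int n ^ p - (\<Sum>l\<in>{1..p}. int (kk n Ord j (Oj Ord j ! (l - 1))) - 1))"
proof -
  interpret csam n p Ord optimistic R j using assms by unfold_locales
  show ?thesis using opt_thm pess_thm by blast
qed

end
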